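(* Let $k$ be a non-archimedean local field of residue characteristic $2$. Let $B(x)=\Delta x^2$ on $k$, where $\Delta$ is a non-square unit of $\mathfrak o$ with quadratic defect $\varpi^d\mathfrak o$. Let $z=q^{-\beta}$, $w=zq^{-1}$, and $t\in\mathfrak o\setminus\{0\}$ with $|t|=q^{-T}$. If $|2|\ge|\varpi^d t^2|$, then \[ X^B(\beta;t^2)=|\varpi|^{\lceil e/2\rceil}\,\frac{1-(zw)^{T+\lceil (d+1-e)/2\rceil}}{1-zw} + w\,|\varpi|^{\lfloor e/2\rfloor}\,\frac{1-(zw)^{T+\lfloor (d+1-e)/2\rfloor}}{1-zw}, \] and $X^B(\beta;t^2)=0$ otherwise.
   Context: $k$ has ring of integers $\mathfrak o$, uniformizer $\varpi$, residue field of cardinality $q$, absolute value normalized by $|\varpi|=q^{-1}$, and $e=\operatorname{ord}(2)$ is the ramification index. On $\mathfrak o^n$ use the additive Haar measure of total mass $1$. For a quadratic form $B$ on $k^n$, $\rho\in\mathfrak o$ and integer $\ell\ge0$: $X_\ell^B(\rho)=\operatorname{meas}\{x\in\mathfrak o^n: B(x)-\rho\in 2\varpi^\ell\mathfrak o\}$ and $X^B(\beta;\rho)=\sum_{\ell\ge0}z^\ell X_\ell^B(\rho)$ with $z=q^{-\beta}$. The quadratic defect of $\rho\in k$ is the intersection of all ideals $b\mathfrak o$ over those $b\in k$ for which $\rho-b$ is a square in $k$. *)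

theory Defs
  imports "HOL-Analysis.Analysis"
begin

text \<open>A discretely valued field is given by a field type and a normalized
  valuation v on its nonzero elements (the value at 0 is irrelevant; 0 is
  treated as having valuation +infinity via vge).\<close>

definition vge :: "('a::field \<Rightarrow> int) \<Rightarrow> 'a \<Rightarrow> int \<Rightarrow> bool" where
  "vge v x N \<longleftrightarrow> x = 0 \<or> N \<le> v x"

definition discrete_val :: "('a::field \<Rightarrow> int) \<Rightarrow> bool" where
  "discrete_val v \<longleftrightarrow>
     (\<forall>x y. x \<noteq> 0 \<and> y \<noteq> 0 \<longrightarrow> v (x * y) = v x + v y) \<and>
     (\<forall>x y. x \<noteq> 0 \<and> y \<noteq> 0 \<and> x + y \<noteq> 0 \<longrightarrow> min (v x) (v y) \<le> v (x + y)) \<and>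
     (\<forall>n. \<exists>x. x \<noteq> 0 \<and> v x = n)"

definition ints :: "('a::field \<Rightarrow> int) \<Rightarrow> 'a set" where
  "ints v = {x. vge v x 0}"

definition val_complete :: "('a::field \<Rightarrow> int) \<Rightarrow> bool" where
  "val_complete v \<longleftrightarrow>
     (\<forall>f :: nat \<Rightarrow> 'a. (\<forall>N. \<exists>M. \<forall>m\<ge>M. \<forall>n\<ge>M. vge v (f m - f n) N) \<longrightarrow>
        (\<exists>L. \<forall>N. \<exists>M. \<forall>n\<ge>M. vge v (f n - L) N))"

definition vball :: "('a::field \<Rightarrow> int) \<Rightarrow> nat \<Rightarrow> 'a \<Rightarrow> 'a set" where
  "vball v N x = {y \<in> ints v. vge v (y - x) (int N)}"

definition residue_classes :: "('a::field \<Rightarrow> int) \<Rightarrow> 'a set set" where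
  "residue_classes v = vball v 1 ` ints v"

definition resq :: "('a::field \<Rightarrow> int) \<Rightarrow> nat" where
  "resq v = card (residue_classes v)"

definition nonarch_local_field :: "('a::field \<Rightarrow> int) \<Rightarrow> bool" where
  "nonarch_local_field v \<longleftrightarrow> discrete_val v \<and> val_complete v \<and> finite (residue_classes v)"

definition absv :: "('a::field \<Rightarrow> int) \<Rightarrow> 'a \<Rightarrow> real" where
  "absv v x = (if x = 0 then 0 else real (resq v) powi (- v x))"

text \<open>Haar measure on o of total mass 1, for compact subsets S of o:
  infimum over N of (number of cosets of varpi^N o meeting S) / q^N.\<close>
definition haar :: "('a::field \<Rightarrow> int) \<Rightarrow> 'a set \<Rightarrow> real" where
  "haar v S = (INF N::nat. real (card (vball v N ` S)) / real (resq v) ^ N)"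

definition pideal :: "('a::field \<Rightarrow> int) \<Rightarrow> 'a \<Rightarrow> 'a set" where
  "pideal v b = {b * y | y. y \<in> ints v}"

definition qdefect :: "('a::field \<Rightarrow> int) \<Rightarrow> 'a \<Rightarrow> 'a set" where
  "qdefect v \<rho> = \<Inter> {pideal v b | b. \<exists>s. \<rho> - b = s ^ 2}"

definition Xl :: "('a::field \<Rightarrow> int) \<Rightarrow> 'a \<Rightarrow> ('a \<Rightarrow> 'a) \<Rightarrow> 'a \<Rightarrow> nat \<Rightarrow> real" where
  "Xl v \<pi> B \<rho> l = haar v {x \<in> ints v. B x - \<rho> \<in> pideal v (2 * \<pi> ^ l)}"

definition XB :: "('a::field \<Rightarrow> int) \<Rightarrow> 'a \<Rightarrow> ('a \<Rightarrow> 'a) \<Rightarrow> complex \<Rightarrow> 'a \<Rightarrow> complex" where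
  "XB v \<pi> B \<beta> \<rho> =
     (\<Sum>l. (of_nat (resq v) powr (- \<beta>)) ^ l * complex_of_real (Xl v \<pi> B \<rho> l))"

end

theory Submission
  imports Defs
begin


context
  fixes v :: "'a::field \<Rightarrow> int"
  assumes dv: "discrete_val v"
begin

lemma vmul: "x \<noteq> 0 \<Longrightarrow> y \<noteq> 0 \<Longrightarrow> v (x * y) = v x + v y"
  using dv unfolding discrete_val_def by blast

lemma vadd0: "x \<noteq> 0 \<Longrightarrow> y \<noteq> 0 \<Longrightarrow> x + y \<noteq> 0 \<Longrightarrow> min (v x) (v y) \<le> v (x + y)"
  using dv unfolding discrete_val_def by blast

lemma vone: "v 1 = 0"
  using vmul[of 1 1] by simp

lemma vneg1: "v (-1) = 0"
  using vmul[of "-1" "-1"] vone by simp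

lemma vneg: "v (- x) = v x"
proof (cases "x = 0")
  case False
  then show ?thesis using vmul[of "-1" x] vneg1 by simp
qed simp

lemma vinverse: "x \<noteq> 0 \<Longrightarrow> v (inverse x) = - v x"
  using vmul[of x "inverse x"] vone by simp

lemma vdiv: "x \<noteq> 0 \<Longrightarrow> y \<noteq> 0 \<Longrightarrow> v (x / y) = v x - v y"
  by (simp add: divide_inverse vmul vinverse)

lemma vpow: "x \<noteq> 0 \<Longrightarrow> v (x ^ n) = int n * v x"
  by (induction n) (simp_all add: vone vmul algebra_simps)

lemma vge_add: "vge v a N \<Longrightarrow> vge v b N \<Longrightarrow> vge v (a + b) N"
  unfolding vge_def using vadd0[of a b] by fastforce

lemma vge_neg: "vge v (- a) N \<longleftrightarrow> vge v a N"
  unfolding vge_def by (simp add: vneg)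

lemma vge_diff: "vge v a N \<Longrightarrow> vge v b N \<Longrightarrow> vge v (a - b) N"
  using vge_add[of a N "-b"] vge_neg by simp

lemma vge_mono: "vge v a N \<Longrightarrow> M \<le> N \<Longrightarrow> vge v a M"
  unfolding vge_def by auto

lemma vge_mult: "vge v a N \<Longrightarrow> vge v b M \<Longrightarrow> vge v (a * b) (N + M)"
  unfolding vge_def by (cases "a = 0"; cases "b = 0") (auto simp: vmul)

lemma vge_iff: "x \<noteq> 0 \<Longrightarrow> vge v x N \<longleftrightarrow> N \<le> v x"
  unfolding vge_def by simp

lemma vstrict:
  assumes "x \<noteq> 0" "vge v y (v x + 1)"
  shows "x + y \<noteq> 0 \<and> v (x + y) = v x"
proof (cases "y = 0")
  case True then show ?thesis using assms by simp
next
  case False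
  have vy: "v y > v x" using assms False by (simp add: vge_def)
  have ne: "x + y \<noteq> 0"
  proof
    assume "x + y = 0" then have "y = - x" by (simp add: eq_neg_iff_add_eq_0 add.commute)
    then show False using vy vneg by simp
  qed
  have 1: "v (x + y) \<ge> v x" using vadd0[OF assms(1) False ne] vy by simp
  have "x = (x + y) + (- y)" by simp
  then have "min (v (x+y)) (v (-y)) \<le> v x"
    using vadd0[OF ne, of "-y"] False assms(1) by (metis neg_equal_0_iff_equal)
  then have "v (x + y) \<le> v x" using vy vneg[of y] by linarith
  with 1 ne show ?thesis by simp
qed

lemma pideal_iff:
  assumes "b \<noteq> 0"
  shows "z \<in> pideal v b \<longleftrightarrow> vge v z (v b)"
proof
  assume "z \<in> pideal v b"
  then obtain y where y: "z = b * y" "vge v y 0" unfolding pideal_def ints_def by auto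
  show "vge v z (v b)" using vge_mult[of b "v b" y 0] y by (simp add: vge_def mult.commute)
next
  assume h: "vge v z (v b)"
  have "z = b * (z / b)" using assms by simp
  moreover have "vge v (z / b) 0"
    using h assms by (cases "z = 0") (auto simp: vge_def vdiv)
  ultimately show "z \<in> pideal v b" unfolding pideal_def ints_def by blast
qed

lemma vball_eq_iff:
  assumes "x \<in> ints v" "x' \<in> ints v"
  shows "vball v N x = vball v N x' \<longleftrightarrow> vge v (x - x') (int N)"
proof
  assume "vball v N x = vball v N x'"
  moreover have "x \<in> vball v N x" using assms by (simp add: vball_def vge_def)
  ultimately show "vge v (x - x') (int N)" by (simp add: vball_def)
next
  assume h: "vge v (x - x') (int N)"
  have h': "vge v (x' - x) (int N)" using h vge_neg[of "x - x'"] by simp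
  show "vball v N x = vball v N x'"
    unfolding vball_def using vge_add[OF _ h] vge_add[OF _ h'] by force
qed

end


lemma card_image_eqv:
  assumes "\<And>y y'. y \<in> A \<Longrightarrow> y' \<in> A \<Longrightarrow> g y = g y' \<longleftrightarrow> h y = h y'"
  shows "card (g ` A) = card (h ` A)"
proof -
  let ?P = "(\<lambda>y. (g y, h y)) ` A"
  have "inj_on fst ?P" using assms by (auto simp: inj_on_def)
  moreover have "fst ` ?P = g ` A" by (auto simp: image_image)
  moreover have "inj_on snd ?P" using assms by (auto simp: inj_on_def)
  moreover have "snd ` ?P = h ` A" by (auto simp: image_image)
  ultimately show ?thesis by (metis card_image)
qed

context
  fixes v :: "'a::field \<Rightarrow> int" and \<pi> :: 'a
  assumes dv: "discrete_val v" and pnz: "\<pi> \<noteq> 0" and vp: "v \<pi> = 1"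
begin

lemma vpiK: "v (\<pi> ^ K) = int K"
  using vpow[OF dv pnz] vp by simp

lemma vge_piK: "vge v (\<pi> ^ K * u) (int K + m) \<longleftrightarrow> vge v u m"
  using pnz by (cases "u = 0") (auto simp: vge_def vmul[OF dv] vpiK)

lemma ints_add: "x \<in> ints v \<Longrightarrow> y \<in> ints v \<Longrightarrow> x + y \<in> ints v"
  unfolding ints_def using vge_add[OF dv] by auto
lemma ints_mult: "x \<in> ints v \<Longrightarrow> y \<in> ints v \<Longrightarrow> x * y \<in> ints v"
  unfolding ints_def using vge_mult[OF dv, of x 0 y 0] by auto
lemma ints_pi: "\<pi> ^ K \<in> ints v"
  unfolding ints_def vge_def using vpiK by simp

lemma L0:
  assumes c: "c \<in> ints v"
  shows "card (vball v (Suc K) ` vball v K c) = resq v"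
proof -
  have img: "vball v K c = (\<lambda>y. c + \<pi> ^ K * y) ` ints v"
  proof
    show "vball v K c \<subseteq> (\<lambda>y. c + \<pi> ^ K * y) ` ints v"
    proof
      fix x assume x: "x \<in> vball v K c"
      let ?y = "(x - c) / \<pi> ^ K"
      have "x - c = \<pi> ^ K * ?y" using pnz by simp
      have xc: "vge v (x - c) (int K)" using x by (simp add: vball_def)
      have "vge v (\<pi> ^ K * ?y) (int K + 0)" using xc \<open>x - c = \<pi> ^ K * ?y\<close> by (metis add.right_neutral)
      then have "vge v ?y 0" by (simp only: vge_piK)
      then have "?y \<in> ints v" by (simp add: ints_def)
      moreover have "x = c + \<pi> ^ K * ?y" using pnz by simp
      ultimately show "x \<in> (\<lambda>y. c + \<pi> ^ K * y) ` ints v" by blast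
    qed
  next
    show "(\<lambda>y. c + \<pi> ^ K * y) ` ints v \<subseteq> vball v K c"
    proof
      fix x assume "x \<in> (\<lambda>y. c + \<pi> ^ K * y) ` ints v"
      then obtain y where y: "y \<in> ints v" "x = c + \<pi> ^ K * y" by blast
      have "vge v y 0" using y by (simp add: ints_def)
      then have "vge v (\<pi> ^ K * y) (int K + 0)" by (simp only: vge_piK)
      then show "x \<in> vball v K c" using y c by (simp add: vball_def ints_add ints_mult ints_pi)
    qed
  qed
  have "vball v (Suc K) ` vball v K c = (\<lambda>y. vball v (Suc K) (c + \<pi> ^ K * y)) ` ints v"
    unfolding img by (simp add: image_image)
  also have "card \<dots> = card (vball v 1 ` ints v)"
  proof (rule card_image_eqv)
    fix y y' assume y: "y \<in> ints v" "y' \<in> ints v"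
    have m: "c + \<pi> ^ K * y \<in> ints v" "c + \<pi> ^ K * y' \<in> ints v"
      using y c by (simp_all add: ints_add ints_mult ints_pi)
    have "(c + \<pi> ^ K * y) - (c + \<pi> ^ K * y') = \<pi> ^ K * (y - y')" by (simp add: algebra_simps)
    then have "vball v (Suc K) (c + \<pi> ^ K * y) = vball v (Suc K) (c + \<pi> ^ K * y') \<longleftrightarrow> vge v (y - y') 1"
      using vball_eq_iff[OF dv m, of "Suc K"] vge_piK[of K "y - y'" 1] by (simp add: add.commute)
    also have "\<dots> \<longleftrightarrow> vball v 1 y = vball v 1 y'" using vball_eq_iff[OF dv y, of 1] by simp
    finally show "vball v (Suc K) (c + \<pi> ^ K * y) = vball v (Suc K) (c + \<pi> ^ K * y') \<longleftrightarrow> vball v 1 y = vball v 1 y'" .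
  qed
  finally show ?thesis by (simp add: resq_def residue_classes_def)
qed

lemma vball_sub: "vball v (N + M) x \<subseteq> vball v N x"
  unfolding vball_def using vge_mono[OF dv, of _ "int (N+M)" "int N"] by auto

lemma L1:
  assumes fin: "finite (residue_classes v)" and b: "b \<in> ints v"
  shows "finite (vball v (N + M) ` vball v N b) \<and> card (vball v (N + M) ` vball v N b) = resq v ^ M"
proof (induction M)
  case 0
  have "vball v N ` vball v N b = {vball v N b}"
  proof -
    have "vball v N x = vball v N b" if "x \<in> vball v N b" for x
      using that b vball_eq_iff[OF dv, of x b N] by (auto simp: vball_def)
    moreover have "b \<in> vball v N b" using b by (simp add: vball_def vge_def)
    ultimately show ?thesis by blast
  qed
  then show ?case by simp
next
  case (Suc M)
  let ?F = "vball v (N + M) ` vball v N b"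
  have eq: "vball v (N + Suc M) ` vball v N b = (\<Union>B\<in>?F. vball v (N + Suc M) ` B)"
  proof
    show "vball v (N + Suc M) ` vball v N b \<subseteq> (\<Union>B\<in>?F. vball v (N + Suc M) ` B)"
    proof
      fix X assume "X \<in> vball v (N + Suc M) ` vball v N b"
      then obtain x where x: "x \<in> vball v N b" "X = vball v (N + Suc M) x" by blast
      have "x \<in> vball v (N + M) x" using x by (simp add: vball_def vge_def)
      then show "X \<in> (\<Union>B\<in>?F. vball v (N + Suc M) ` B)" using x by blast
    qed
  next
    show "(\<Union>B\<in>?F. vball v (N + Suc M) ` B) \<subseteq> vball v (N + Suc M) ` vball v N b"
    proof
      fix X assume "X \<in> (\<Union>B\<in>?F. vball v (N + Suc M) ` B)"
      then obtain x y where x: "x \<in> vball v N b" "y \<in> vball v (N + M) x" "X = vball v (N + Suc M) y" by blast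
      have "y \<in> vball v N b"
      proof -
        have "vge v (y - x) (int N)" using x(2) vge_mono[OF dv, of _ "int (N+M)" "int N"] by (auto simp: vball_def)
        moreover have "vge v (x - b) (int N)" using x(1) by (simp add: vball_def)
        ultimately have "vge v ((y - x) + (x - b)) (int N)" using vge_add[OF dv] by blast
        then show ?thesis using x(2) by (simp add: vball_def)
      qed
      then show "X \<in> vball v (N + Suc M) ` vball v N b" using x by blast
    qed
  qed
  have each: "finite (vball v (N + Suc M) ` B) \<and> card (vball v (N + Suc M) ` B) = resq v" if "B \<in> ?F" for B
  proof -
    obtain x where x: "x \<in> vball v N b" "B = vball v (N + M) x" using \<open>B \<in> ?F\<close> by blast
    have xi: "x \<in> ints v" using x by (simp add: vball_def)
    have c: "card (vball v (N + Suc M) ` B) = resq v" using L0[OF xi, of "N + M"] x by simp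
    have "vball v (N + Suc M) ` B \<subseteq> residue_classes v \<or> True" by simp
    have "resq v > 0"
    proof -
      have "vball v 1 0 \<in> residue_classes v" by (simp add: residue_classes_def ints_def vge_def)
      then show ?thesis using fin by (simp add: resq_def card_gt_0_iff) blast
    qed
    then show ?thesis using c card.infinite by (metis less_numeral_extra(3))
  qed
  have disj: "vball v (N + Suc M) ` B \<inter> vball v (N + Suc M) ` B' = {}" if "B \<in> ?F" "B' \<in> ?F" "B \<noteq> B'" for B B'
  proof (rule ccontr)
    assume "vball v (N + Suc M) ` B \<inter> vball v (N + Suc M) ` B' \<noteq> {}"
    then obtain y y' where yy: "y \<in> B" "y' \<in> B'" "vball v (N + Suc M) y = vball v (N + Suc M) y'" by blast
    obtain x where x: "x \<in> vball v N b" "B = vball v (N + M) x" using \<open>B \<in> ?F\<close> by blast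
    obtain x' where x': "x' \<in> vball v N b" "B' = vball v (N + M) x'" using \<open>B' \<in> ?F\<close> by blast
    have yi: "y \<in> ints v" "y' \<in> ints v" using yy x x' by (auto simp: vball_def)
    have xi: "x \<in> ints v" "x' \<in> ints v" using x x' by (auto simp: vball_def)
    have "vge v (y - y') (int (N + Suc M))" using vball_eq_iff[OF dv yi] yy by simp
    then have a: "vge v (y - y') (int (N + M))" using vge_mono[OF dv, of _ "int (N + Suc M)" "int (N+M)"] by simp
    have b1: "vge v (x - y) (int (N + M))" using yy x vge_neg[OF dv, of "y - x"] by (simp add: vball_def)
    have b2: "vge v (y' - x') (int (N + M))" using yy x' by (simp add: vball_def)
    have "vge v ((x - y) + (y - y') + (y' - x')) (int (N + M))" using vge_add[OF dv] a b1 b2 by blast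
    then have "vball v (N + M) x = vball v (N + M) x'" using vball_eq_iff[OF dv xi] by simp
    then show False using x x' \<open>B \<noteq> B'\<close> by simp
  qed
  have finF: "finite ?F" using Suc.IH by simp
  have "card (\<Union>B\<in>?F. vball v (N + Suc M) ` B) = (\<Sum>B\<in>?F. card (vball v (N + Suc M) ` B))"
    by (rule card_UN_disjoint[OF finF]) (use each disj in auto)
  also have "\<dots> = (\<Sum>B\<in>?F. resq v)" using each by simp
  also have "\<dots> = resq v ^ Suc M" using Suc.IH by simp
  finally have cU: "card (\<Union>B\<in>?F. vball v (N + Suc M) ` B) = resq v ^ Suc M" .
  have fU: "finite (\<Union>B\<in>?F. vball v (N + Suc M) ` B)" using finF each by blast
  show ?case unfolding eq using cU fU by blast
qed

end


context
  fixes v :: "'a::field \<Rightarrow> int" and \<pi> :: 'a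
  assumes dv: "discrete_val v" and pnz: "\<pi> \<noteq> 0" and vp: "v \<pi> = 1"
    and fin: "finite (residue_classes v)"
begin

lemma resq_ge2: "resq v \<ge> 2"
proof -
  have i: "(0::'a) \<in> ints v" "(1::'a) \<in> ints v" by (simp_all add: ints_def vge_def vone[OF dv])
  have "vball v 1 0 \<noteq> vball v 1 1"
    using vball_eq_iff[OF dv i, of 1] by (simp add: vge_def vneg1[OF dv])
  moreover have "{vball v 1 0, vball v 1 1} \<subseteq> residue_classes v"
    using i by (auto simp: residue_classes_def)
  ultimately show ?thesis unfolding resq_def
    by (metis card_2_iff card_mono fin)
qed

lemma haar_ball:
  assumes a: "a \<in> ints v"
  shows "haar v (vball v N a) = 1 / real (resq v) ^ N"
proof -
  let ?q = "real (resq v)"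
  have q1: "?q \<ge> 1" using resq_ge2 by simp
  define f where "f M = real (card (vball v M ` vball v N a)) / ?q ^ M" for M
  have small: "f M = 1 / ?q ^ M" if "M \<le> N" for M
  proof -
    have "vball v M ` vball v N a = {vball v M a}"
    proof -
      have "vball v M x = vball v M a" if "x \<in> vball v N a" for x
        using that a vball_eq_iff[OF dv, of x a M] vge_mono[OF dv, of "x - a" "int N" "int M"] \<open>M \<le> N\<close>
        by (auto simp: vball_def)
      moreover have "a \<in> vball v N a" using a by (simp add: vball_def vge_def)
      ultimately show ?thesis by blast
    qed
    then show ?thesis by (simp add: f_def)
  qed
  have big: "f (N + K) = 1 / ?q ^ N" for K
  proof -
    have "card (vball v (N + K) ` vball v N a) = resq v ^ K" using L1[OF dv pnz vp fin a] by blast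
    then show ?thesis using q1 by (simp add: f_def power_add)
  qed
  have "haar v (vball v N a) = Inf (range f)" by (simp add: haar_def f_def)
  also have "\<dots> = 1 / ?q ^ N"
  proof (rule cInf_eq_minimum)
    show "1 / ?q ^ N \<in> range f" using big[of 0] by (metis add_0_right rangeI)
  next
    fix x assume "x \<in> range f"
    then obtain M where x: "x = f M" by blast
    show "1 / ?q ^ N \<le> x"
    proof (cases "M \<le> N")
      case True
      have "?q ^ M \<le> ?q ^ N" using q1 True by (simp add: power_increasing)
      then show ?thesis using x small[OF True] q1
        by (simp add: frac_le)
    next
      case False
      then obtain K where "M = N + K" by (metis le_add_diff_inverse nat_le_linear)
      then show ?thesis using x big by simp
    qed
  qed
  finally show ?thesis .
qed

end

lemma haar_empty: "haar v {} = 0"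
  by (simp add: haar_def)



locale PS =
  fixes v :: "'a::field \<Rightarrow> int" and \<pi> \<Delta> t :: 'a and d T :: nat
  assumes dv: "discrete_val v" and fin: "finite (residue_classes v)"
    and char0: "(2::'a) \<noteq> 0"
    and res2: "vge v 2 1"
    and pnz: "\<pi> \<noteq> 0" and vp: "v \<pi> = 1"
    and Dnz: "\<Delta> \<noteq> 0" and vD: "v \<Delta> = 0"
    and nonsq: "\<not> (\<exists>s. \<Delta> = s ^ 2)"
    and defect: "qdefect v \<Delta> = pideal v (\<pi> ^ d)"
    and tnz: "t \<noteq> 0" and tint: "t \<in> ints v"
    and vT: "v t = int T"
begin

lemma e_ge1: "v 2 \<ge> 1" using res2 char0 by (simp add: vge_def)

lemma Dsq_nz: "\<Delta> - s ^ 2 \<noteq> 0" using nonsq by auto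

lemma pid_pi: "\<pi> ^ d \<in> pideal v (\<pi> ^ d)"
  unfolding pideal_def ints_def by (rule CollectI, rule exI[of _ 1]) (simp add: vge_def vone[OF dv])

lemma defA: "v (\<Delta> - s ^ 2) \<le> int d"
proof -
  let ?b = "\<Delta> - s ^ 2"
  have "?b \<in> {b | b. \<exists>s. \<Delta> - b = s ^ 2}" by auto
  then have "qdefect v \<Delta> \<subseteq> pideal v ?b" unfolding qdefect_def by blast
  then have "\<pi> ^ d \<in> pideal v ?b" using pid_pi defect by blast
  then have "vge v (\<pi> ^ d) (v ?b)" using pideal_iff[OF dv Dsq_nz] by blast
  then show ?thesis using vpiK[OF dv pnz vp, of d] pnz by (simp add: vge_def)
qed

lemma defB: "\<exists>s. v (\<Delta> - s ^ 2) = int d"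
proof (rule ccontr)
  assume na: "\<not> ?thesis"
  have lt: "v (\<Delta> - s ^ 2) \<le> int d - 1" for s
  proof -
    have "v (\<Delta> - s ^ 2) \<noteq> int d" using na by blast
    then show ?thesis using defA[of s] by linarith
  qed
  let ?p = "\<pi> ^ d / \<pi>"
  have pnz': "?p \<noteq> 0" using pnz by simp
  have vpp: "v ?p = int d - 1" using vdiv[OF dv, of "\<pi> ^ d" \<pi>] pnz vpiK[OF dv pnz vp] vp by simp
  have "?p \<in> qdefect v \<Delta>"
    unfolding qdefect_def
  proof (rule InterI)
    fix X assume "X \<in> {pideal v b | b. \<exists>s. \<Delta> - b = s ^ 2}"
    then obtain b s where X: "X = pideal v b" "\<Delta> - b = s ^ 2" by blast
    then have b: "b = \<Delta> - s ^ 2" by (simp add: algebra_simps)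
    have "vge v ?p (v b)" using lt[of s] b vpp pnz' by (simp add: vge_def)
    then show "?p \<in> X" using X b pideal_iff[OF dv Dsq_nz] by blast
  qed
  then have "?p \<in> pideal v (\<pi> ^ d)" using defect by simp
  then have "vge v ?p (v (\<pi> ^ d))" using pideal_iff[OF dv] pnz by simp
  then show False using vpp pnz' vpiK[OF dv pnz vp] by (simp add: vge_def)
qed

lemma s0_ex: "\<exists>s. s \<noteq> 0 \<and> v s = 0 \<and> v (\<Delta> - s ^ 2) = int d"
proof (cases "d = 0")
  case True
  have ne: "\<Delta> - 1 \<noteq> 0" using Dsq_nz[of 1] by simp
  have "min (v \<Delta>) (v (-1)) \<le> v (\<Delta> + -1)"
    using vadd0[OF dv Dnz, of "-1"] ne by simp
  then have "0 \<le> v (\<Delta> - 1)" using vD vneg1[OF dv] by simp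
  moreover have "v (\<Delta> - 1) \<le> 0" using defA[of 1] True by simp
  ultimately show ?thesis using True vone[OF dv] by (intro exI[of _ 1]) simp
next
  case False
  obtain s where s: "v (\<Delta> - s ^ 2) = int d" using defB by blast
  have snz: "s \<noteq> 0" using s vD False by auto
  have vs2: "v (s ^ 2) = 2 * v s" using vpow[OF dv snz, of 2] by simp
  have "v s = 0"
  proof (rule ccontr)
    assume ne: "v s \<noteq> 0"
    show False
    proof (cases "v s > 0")
      case True
      have "vge v (- (s ^ 2)) (v \<Delta> + 1)" using vs2 True vD snz by (simp add: vge_def vneg[OF dv])
      then have "v (\<Delta> + - (s ^ 2)) = v \<Delta>" using vstrict[OF dv Dnz] by blast
      then show False using s vD False by simp
    next
      case F: False
      have s2: "- (s ^ 2) \<noteq> 0" using snz by simp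
      have "vge v \<Delta> (v (- (s ^ 2)) + 1)" using vs2 F ne vD Dnz by (simp add: vge_def vneg[OF dv])
      then have "v (- (s ^ 2) + \<Delta>) = v (- (s ^ 2))" using vstrict[OF dv s2] by blast
      then show False using s vs2 F ne vneg[OF dv, of "s^2"] by (simp add: algebra_simps)
    qed
  qed
  then show ?thesis using s snz by blast
qed

lemma v4: "v (4::'a) = 2 * v 2"
  using vmul[OF dv char0 char0] by simp

lemma d_le: "int d \<le> 2 * v 2"
proof (rule ccontr)
  assume h: "\<not> ?thesis"
  obtain s where s: "s \<noteq> 0" "v s = 0" "v (\<Delta> - s ^ 2) = int d" using s0_ex by blast
  define D where "D = \<Delta> - s ^ 2"
  have Dn: "D \<noteq> 0" using Dsq_nz D_def by simp
  define s1 where "s1 = s + D / (2 * s)"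
  have n4: "(4::'a) \<noteq> 0" using char0 by (metis mult_2 mult_eq_0_iff numeral_Bit0 one_add_one)
  have eq: "\<Delta> - s1 ^ 2 = - (D ^ 2 / (4 * s ^ 2))"
    using s(1) char0 n4 unfolding s1_def D_def by (simp add: field_simps power2_eq_square)
  have "v (\<Delta> - s1 ^ 2) = 2 * int d - 2 * v 2"
    unfolding eq vneg[OF dv]
    using vdiv[OF dv, of "D^2" "4 * s^2"] vmul[OF dv n4, of "s^2"] vpow[OF dv Dn, of 2] vpow[OF dv s(1), of 2]
      s Dn n4 v4 D_def by simp
  then show False using defA[of s1] h by simp
qed

end


context PS
begin

lemma bound9: "\<Delta> * x ^ 2 - t ^ 2 \<noteq> 0 \<and> v (\<Delta> * x ^ 2 - t ^ 2) \<le> 2 * int T + int d"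
proof (cases "x = 0")
  case True
  then show ?thesis using tnz vpow[OF dv tnz, of 2] vT vneg[OF dv] by simp
next
  case xnz: False
  have ne: "\<Delta> * x ^ 2 - t ^ 2 \<noteq> 0"
  proof
    assume "\<Delta> * x ^ 2 - t ^ 2 = 0"
    then have "\<Delta> = (t / x) ^ 2" using xnz by (simp add: field_simps)
    then show False using nonsq by blast
  qed
  show ?thesis
  proof (cases "v x > int T")
    case True
    have t2: "- (t ^ 2) \<noteq> 0" using tnz by simp
    have vt2: "v (- (t ^ 2)) = 2 * int T" using vneg[OF dv] vpow[OF dv tnz, of 2] vT by simp
    have "vge v (\<Delta> * x ^ 2) (v (- (t ^ 2)) + 1)"
      using vt2 True xnz Dnz vmul[OF dv Dnz, of "x^2"] vpow[OF dv xnz, of 2] vD by (simp add: vge_def)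
    then have A: "v (- (t ^ 2) + \<Delta> * x ^ 2) = 2 * int T" using vstrict[OF dv t2] vt2 by simp
    have B: "\<Delta> * x ^ 2 - t ^ 2 = - (t ^ 2) + \<Delta> * x ^ 2" by (metis add.commute diff_conv_add_uminus)
    have "v (\<Delta> * x ^ 2 - t ^ 2) = 2 * int T" by (simp only: A B)
    then have "v (\<Delta> * x ^ 2 - t ^ 2) \<le> 2 * int T + int d" by linarith
    with ne show ?thesis by (rule conjI)
  next
    case False
    have eq: "\<Delta> * x ^ 2 - t ^ 2 = x ^ 2 * (\<Delta> - (t / x) ^ 2)" using xnz by (simp add: field_simps)
    have "v (\<Delta> * x ^ 2 - t ^ 2) = 2 * v x + v (\<Delta> - (t / x) ^ 2)"
      unfolding eq using vmul[OF dv, of "x^2" "\<Delta> - (t / x) ^ 2"] vpow[OF dv xnz, of 2] xnz Dsq_nz by simp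
    then show ?thesis using defA[of "t / x"] False ne by simp
  qed
qed

definition aa where "aa = t / (SOME s. s \<noteq> 0 \<and> v s = 0 \<and> v (\<Delta> - s ^ 2) = int d)"

lemma aa_props: "aa \<noteq> 0 \<and> v aa = int T \<and> aa \<in> ints v \<and> v (\<Delta> * aa ^ 2 - t ^ 2) = 2 * int T + int d"
proof -
  define s where "s = (SOME s. s \<noteq> 0 \<and> v s = 0 \<and> v (\<Delta> - s ^ 2) = int d)"
  have s: "s \<noteq> 0" "v s = 0" "v (\<Delta> - s ^ 2) = int d"
    using someI_ex[OF s0_ex] unfolding s_def by blast+
  have a: "aa = t / s" by (simp add: aa_def s_def)
  have anz: "aa \<noteq> 0" using a s tnz by simp
  have va: "v aa = int T" using a vdiv[OF dv tnz s(1)] s vT by simp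
  have eq: "\<Delta> * aa ^ 2 - t ^ 2 = (t / s) ^ 2 * (\<Delta> - s ^ 2)" unfolding a using s(1) by (simp add: field_simps)
  have "v (\<Delta> * aa ^ 2 - t ^ 2) = 2 * int T + int d"
    unfolding eq using vmul[OF dv, of "(t/s)^2" "\<Delta> - s ^ 2"] vpow[OF dv, of "t/s" 2] a anz va Dsq_nz s
    by simp
  then show ?thesis using anz va by (simp add: ints_def vge_def)
qed

lemma key:
  assumes x: "x \<in> ints v" and n: "n \<le> 2 * int T + int d"
  shows "vge v (\<Delta> * x ^ 2 - t ^ 2) n \<longleftrightarrow> vge v (x - aa) ((n + 1) div 2)"
proof -
  let ?c = "(n + 1) div 2"
  let ?e = "v 2"
  define h where "h = x - aa"
  have A: "aa \<noteq> 0" "v aa = int T" "v (\<Delta> * aa ^ 2 - t ^ 2) = 2 * int T + int d"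
    using aa_props by blast+
  have dle: "int d \<le> 2 * ?e" using d_le .
  have decomp: "\<Delta> * x ^ 2 - t ^ 2 = \<Delta> * h * (2 * aa + h) + (\<Delta> * aa ^ 2 - t ^ 2)"
    unfolding h_def by (simp add: algebra_simps power2_eq_square)
  have v2a: "v (2 * aa) = ?e + int T" using vmul[OF dv char0 A(1)] A by simp
  have nz2a: "2 * aa \<noteq> 0" using char0 A by simp
  show ?thesis
  proof
    assume hv: "vge v (x - aa) ?c"
    then have hv': "vge v h ?c" by (simp add: h_def)
    let ?m = "min (?e + int T) ?c"
    have "vge v (2 * aa) ?m" using v2a nz2a by (simp add: vge_def)
    moreover have "vge v h ?m" using vge_mono[OF dv hv', of ?m] by simp
    ultimately have "vge v (2 * aa + h) ?m" by (rule vge_add[OF dv])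
    moreover have "vge v (\<Delta> * h) (0 + ?c)" using vge_mult[OF dv, of \<Delta> 0 h ?c] hv' vD by (simp add: vge_def)
    ultimately have "vge v (\<Delta> * h * (2 * aa + h)) (0 + ?c + ?m)" by (rule vge_mult[OF dv, rotated])
    moreover have "n \<le> 0 + ?c + ?m" using n dle by (simp add: min_def) linarith
    ultimately have 1: "vge v (\<Delta> * h * (2 * aa + h)) n" using vge_mono[OF dv, of _ "0 + ?c + ?m" n] by simp
    have 2: "vge v (\<Delta> * aa ^ 2 - t ^ 2) n" using A n by (simp add: vge_def)
    show "vge v (\<Delta> * x ^ 2 - t ^ 2) n" unfolding decomp using vge_add[OF dv 1 2] .
  next
    assume hv: "vge v (\<Delta> * x ^ 2 - t ^ 2) n"
    show "vge v (x - aa) ?c"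
    proof (rule ccontr)
      assume nh: "\<not> vge v (x - aa) ?c"
      then have hnz: "h \<noteq> 0" and k: "v h < ?c" by (auto simp: h_def vge_def)
      have k2: "2 * v h < n" using k by linarith
      have kl: "v h < ?e + int T" using k2 n dle by linarith
      have "vge v (2 * aa) (v h + 1)" using v2a kl nz2a by (simp add: vge_def)
      then have s1: "h + 2 * aa \<noteq> 0" "v (h + 2 * aa) = v h" using vstrict[OF dv hnz] by blast+
      have p: "\<Delta> * h * (2 * aa + h) \<noteq> 0" using s1 hnz Dnz by (simp add: add.commute)
      have vp2: "v (\<Delta> * h * (2 * aa + h)) = 2 * v h"
        using vmul[OF dv Dnz hnz] vmul[OF dv, of "\<Delta> * h" "2 * aa + h"] s1 hnz Dnz vD
        by (simp add: add.commute)
      have "vge v (\<Delta> * aa ^ 2 - t ^ 2) (v (\<Delta> * h * (2 * aa + h)) + 1)"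
        using vp2 A k2 n by (simp add: vge_def)
      then have "v (\<Delta> * x ^ 2 - t ^ 2) = 2 * v h"
        unfolding decomp using vstrict[OF dv p] vp2 by simp
      then show False using hv bound9[of x] k2 by (simp add: vge_def)
    qed
  qed
qed

end


context PS
begin

lemma Xl_val:
  "Xl v \<pi> (\<lambda>x. \<Delta> * x ^ 2) (t ^ 2) l =
    (if v 2 + int l \<le> 2 * int T + int d then 1 / real (resq v) ^ nat ((v 2 + int l + 1) div 2) else 0)"
proof -
  let ?n = "v 2 + int l"
  have bnz: "2 * \<pi> ^ l \<noteq> 0" using char0 pnz by simp
  have vb: "v (2 * \<pi> ^ l) = ?n" using vmul[OF dv char0, of "\<pi> ^ l"] pnz vpiK[OF dv pnz vp] by simp
  have S: "{x \<in> ints v. \<Delta> * x ^ 2 - t ^ 2 \<in> pideal v (2 * \<pi> ^ l)} = {x \<in> ints v. vge v (\<Delta> * x ^ 2 - t ^ 2) ?n}"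
    using pideal_iff[OF dv bnz] vb by simp
  show ?thesis
  proof (cases "?n \<le> 2 * int T + int d")
    case True
    have c: "int (nat ((?n + 1) div 2)) = (?n + 1) div 2" using e_ge1 by simp
    have "{x \<in> ints v. vge v (\<Delta> * x ^ 2 - t ^ 2) ?n} = vball v (nat ((?n + 1) div 2)) aa"
      unfolding vball_def c using key[OF _ True] by blast
    then show ?thesis using True S haar_ball[OF dv pnz vp fin] aa_props by (simp add: Xl_def)
  next
    case False
    have E: "{x \<in> ints v. vge v (\<Delta> * x ^ 2 - t ^ 2) ?n} = {}"
    proof -
      have "\<not> vge v (\<Delta> * x ^ 2 - t ^ 2) ?n" for x
      proof
        assume h: "vge v (\<Delta> * x ^ 2 - t ^ 2) ?n"
        have b9: "\<Delta> * x ^ 2 - t ^ 2 \<noteq> 0" "v (\<Delta> * x ^ 2 - t ^ 2) \<le> 2 * int T + int d" using bound9[of x] by blast+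
        have "?n \<le> v (\<Delta> * x ^ 2 - t ^ 2)" using h b9(1) unfolding vge_def by blast
        then show False using b9(2) False by linarith
      qed
      then show ?thesis by blast
    qed
    show ?thesis unfolding Xl_def S E haar_empty using False by simp
  qed
qed

end

lemma alg_G:
  fixes z :: complex and q :: real and E :: int
  assumes q: "q > 0" and E: "E \<ge> 0"
  defines "f \<equiv> \<lambda>l::nat. z ^ l * complex_of_real (1 / q ^ nat ((E + int l + 1) div 2))"
  defines "A \<equiv> complex_of_real (1 / q ^ nat ((E + 1) div 2))"
  defines "B \<equiv> complex_of_real (1 / q ^ nat (E div 2))"
  defines "w \<equiv> z / complex_of_real q"
  defines "x \<equiv> z * w"
  shows "(1 - x) * (\<Sum>l<2*j. f l) = A * (1 - x ^ j) + w * B * (1 - x ^ j)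
       \<and> (1 - x) * (\<Sum>l<2*j+1. f l) = A * (1 - x ^ (j+1)) + w * B * (1 - x ^ j)"
proof -
  have f_even: "f (2 * i) = A * x ^ i" for i
  proof -
    have "nat ((E + int (2 * i) + 1) div 2) = nat ((E + 1) div 2) + i" using E by simp
    then have "f (2 * i) = z ^ (2 * i) * complex_of_real (1 / q ^ nat ((E + 1) div 2) * (1 / q) ^ i)"
      unfolding f_def by (simp add: power_add power_divide)
    also have "\<dots> = A * x ^ i" unfolding A_def x_def w_def
      using q by (simp add: power_mult power2_eq_square power_divide field_simps power_mult_distrib)
    finally show ?thesis .
  qed
  have f_odd: "f (2 * i + 1) = w * B * x ^ i" for i
  proof -
    have "nat ((E + int (2 * i + 1) + 1) div 2) = nat (E div 2) + 1 + i" using E by simp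
    then have "f (2 * i + 1) = z ^ (2 * i + 1) * complex_of_real (1 / q ^ nat (E div 2) * (1 / q) * (1 / q) ^ i)"
      unfolding f_def by (simp add: power_add power_divide)
    also have "\<dots> = w * B * x ^ i" unfolding B_def x_def w_def
      using q by (simp add: power_mult power2_eq_square power_divide field_simps power_mult_distrib)
    finally show ?thesis .
  qed
  show ?thesis
  proof (induction j)
    case 0
    then show ?case using f_even[of 0] by (simp add: algebra_simps)
  next
    case (Suc j)
    have s1: "(\<Sum>l<2 * Suc j. f l) = (\<Sum>l<2*j+1. f l) + f (2 * j + 1)" by simp
    have s2: "(\<Sum>l<2 * Suc j + 1. f l) = (\<Sum>l<2*Suc j. f l) + f (2 * Suc j)" by simp
    have a: "(1 - x) * (\<Sum>l<2 * Suc j. f l) = A * (1 - x ^ Suc j) + w * B * (1 - x ^ Suc j)"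
      using Suc.IH f_odd[of j] unfolding s1 by (simp add: algebra_simps)
    moreover have "(1 - x) * (\<Sum>l<2 * Suc j + 1. f l) = A * (1 - x ^ (Suc j + 1)) + w * B * (1 - x ^ Suc j)"
      using a f_even[of "Suc j"] unfolding s2 by (simp add: algebra_simps)
    ultimately show ?case by blast
  qed
qed



lemma floor_half: "\<lfloor>real_of_int m / 2\<rfloor> = m div 2"
  using floor_divide_of_int_eq[of m 2] by simp

lemma ceil_half: "\<lceil>real_of_int m / 2\<rceil> = (m + 1) div 2"
proof -
  have "\<lceil>real_of_int m / 2\<rceil> = - \<lfloor>real_of_int (- m) / 2\<rfloor>"
    by (simp add: ceiling_def)
  also have "\<dots> = - ((- m) div 2)" using floor_half[of "-m"] by simp
  also have "\<dots> = (m + 1) div 2" by presburger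
  finally show ?thesis .
qed

lemma powi_neg_nat: "(q::real) > 0 \<Longrightarrow> k \<ge> 0 \<Longrightarrow> q powi (- k) = 1 / q ^ nat k"
  by (simp add: power_int_minus_divide power_int_nonneg_exp)

theorem proposition5p1:
  fixes v :: "'a::field \<Rightarrow> int" and \<pi> \<Delta> t :: 'a and d T :: nat and \<beta> :: complex
  assumes lf: "nonarch_local_field v"
    and char0: "(2::'a) \<noteq> 0"
    and res2: "vge v 2 1"
    and unif: "\<pi> \<noteq> 0" "v \<pi> = 1"
    and unit: "\<Delta> \<noteq> 0" "v \<Delta> = 0"
    and nonsq: "\<not> (\<exists>s. \<Delta> = s ^ 2)"
    and defect: "qdefect v \<Delta> = pideal v (\<pi> ^ d)"
    and tnz: "t \<noteq> 0" "t \<in> ints v"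
    and tabs: "absv v t = real (resq v) powi (- int T)"
  shows "let q = resq v; e = v 2; z = of_nat q powr (- \<beta>); w = z / of_nat q;
             X = XB v \<pi> (\<lambda>x. \<Delta> * x ^ 2) \<beta> (t ^ 2) in
     (absv v 2 \<ge> absv v (\<pi> ^ d * t ^ 2) \<longrightarrow> z * w \<noteq> 1 \<longrightarrow>
        X = complex_of_real (absv v \<pi> powi \<lceil>real_of_int e / 2\<rceil>)
              * (1 - (z * w) powi (int T + \<lceil>real_of_int (int d + 1 - e) / 2\<rceil>)) / (1 - z * w)
          + w * complex_of_real (absv v \<pi> powi \<lfloor>real_of_int e / 2\<rfloor>)
              * (1 - (z * w) powi (int T + \<lfloor>real_of_int (int d + 1 - e) / 2\<rfloor>)) / (1 - z * w))
     \<and> (\<not> absv v 2 \<ge> absv v (\<pi> ^ d * t ^ 2) \<longrightarrow> X = 0)"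
proof -
  have dv: "discrete_val v" and fin: "finite (residue_classes v)"
    using lf by (auto simp: nonarch_local_field_def)
  define q where "q = resq v"
  have q2: "q \<ge> 2" unfolding q_def by (rule resq_ge2[OF dv unif fin])
  have qpos: "real q > 0" using q2 by simp
  have vt0: "v t \<ge> 0" using tnz by (simp add: ints_def vge_def)
  have vT: "v t = int T"
  proof -
    have "real q powi (- v t) = real q powi (- int T)" using tabs tnz by (simp add: absv_def q_def)
    then have "1 / real q ^ nat (v t) = 1 / real q ^ T" using powi_neg_nat[OF qpos] vt0 by simp
    then have "real q ^ nat (v t) = real q ^ T" by simp
    then have "nat (v t) = T" using q2 by (simp add: power_inject_exp)
    then show ?thesis using vt0 by simp
  qed
  interpret P: PS v \<pi> \<Delta> t d T
    using dv fin char0 res2 unif unit nonsq defect tnz vT by unfold_locales auto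
  define e where "e = v 2"
  have e1: "e \<ge> 1" using P.e_ge1 e_def by simp
  have abs2: "absv v 2 = 1 / real q ^ nat e"
    using char0 powi_neg_nat[OF qpos, of e] e1 by (simp add: absv_def q_def e_def)
  have pdt: "\<pi> ^ d * t ^ 2 \<noteq> 0" using unif tnz by simp
  have vpdt: "v (\<pi> ^ d * t ^ 2) = int d + 2 * int T"
    using vmul[OF dv, of "\<pi> ^ d" "t ^ 2"] vpow[OF dv tnz(1), of 2] vpiK[OF dv unif, of d] vT unif tnz by simp
  have absp: "absv v (\<pi> ^ d * t ^ 2) = 1 / real q ^ (d + 2 * T)"
  proof -
    have n: "nat (int d + 2 * int T) = d + 2 * T" by simp
    have "real q powi (- (int d + 2 * int T)) = 1 / real q ^ (d + 2 * T)"
      using powi_neg_nat[OF qpos, of "int d + 2 * int T"] n by simp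
    then show ?thesis using pdt vpdt unif by (simp add: absv_def q_def)
  qed
  have cond: "absv v 2 \<ge> absv v (\<pi> ^ d * t ^ 2) \<longleftrightarrow> e \<le> 2 * int T + int d"
  proof -
    have "absv v 2 \<ge> absv v (\<pi> ^ d * t ^ 2) \<longleftrightarrow> real q ^ nat e \<le> real q ^ (d + 2 * T)"
      unfolding abs2 absp using qpos by (simp add: frac_le_eq divide_simps)
    also have "\<dots> \<longleftrightarrow> nat e \<le> d + 2 * T" using q2 by (simp add: power_increasing_iff)
    also have "\<dots> \<longleftrightarrow> e \<le> 2 * int T + int d" using e1 by linarith
    finally show ?thesis .
  qed
  define z where "z = (of_nat q :: complex) powr (- \<beta>)"
  define w where "w = z / of_nat q"
  define f where "f = (\<lambda>l::nat. z ^ l * complex_of_real (1 / real q ^ nat ((e + int l + 1) div 2)))"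
  have Xl: "Xl v \<pi> (\<lambda>x. \<Delta> * x ^ 2) (t ^ 2) l =
    (if e + int l \<le> 2 * int T + int d then 1 / real q ^ nat ((e + int l + 1) div 2) else 0)" for l
    using P.Xl_val[of l] by (simp add: e_def q_def)
  have XB: "XB v \<pi> (\<lambda>x. \<Delta> * x ^ 2) \<beta> (t ^ 2) =
      (\<Sum>l. (if e + int l \<le> 2 * int T + int d then f l else 0))"
    unfolding XB_def Xl f_def z_def q_def by (rule arg_cong[where f=suminf]) (auto simp: fun_eq_iff)
  have e0: "e \<ge> 0" using e1 by simp
  have absp1: "absv v \<pi> = 1 / real q" using unif by (simp add: absv_def q_def power_int_minus_divide)
  have Apow: "absv v \<pi> powi k = 1 / real q ^ nat k" if "k \<ge> 0" for k
    using that by (simp add: absp1 power_int_nonneg_exp power_one_over)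
  let ?x = "z * w"
  define A where "A = complex_of_real (1 / real q ^ nat ((e + 1) div 2))"
  define B where "B = complex_of_real (1 / real q ^ nat (e div 2))"
  have wq: "w = z / complex_of_real (real q)" by (simp add: w_def)
  have G: "(1 - ?x) * (\<Sum>l<N. f l) = A * (1 - ?x ^ ((N + 1) div 2)) + w * B * (1 - ?x ^ (N div 2))" for N
  proof -
    have g: "(1 - ?x) * (\<Sum>l<2*j. f l) = A * (1 - ?x ^ j) + w * B * (1 - ?x ^ j)
       \<and> (1 - ?x) * (\<Sum>l<2*j+1. f l) = A * (1 - ?x ^ (j+1)) + w * B * (1 - ?x ^ j)" for j
      using alg_G[OF qpos e0, of z j] unfolding f_def A_def B_def wq by simp
    show ?thesis
    proof (cases "even N")
      case True
      then obtain j where "N = 2 * j" by blast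
      then show ?thesis using g[of j] by simp
    next
      case False
      then obtain j where "N = 2 * j + 1" using oddE by blast
      then show ?thesis using g[of j] by simp
    qed
  qed
  show ?thesis
    unfolding Let_def q_def[symmetric] z_def[symmetric] w_def[symmetric] e_def[symmetric] XB
  proof (intro conjI impI)
    assume c0: "absv v (\<pi> ^ d * t\<^sup>2) \<le> absv v 2" and x1: "?x \<noteq> 1"
    have c: "e \<le> 2 * int T + int d" using c0 cond by simp
    define N where "N = nat (2 * int T + int d - e + 1)"
    have sumN: "(\<Sum>l. (if e + int l \<le> 2 * int T + int d then f l else 0)) = (\<Sum>l<N. f l)"
    proof -
      have "(\<Sum>l. (if e + int l \<le> 2 * int T + int d then f l else 0))
          = (\<Sum>l\<in>{..<N}. (if e + int l \<le> 2 * int T + int d then f l else 0))"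
        by (rule suminf_finite) (auto simp: N_def)
      also have "\<dots> = (\<Sum>l<N. f l)" by (rule sum.cong) (auto simp: N_def)
      finally show ?thesis .
    qed
    have K1: "int T + \<lceil>real_of_int (int d + 1 - e) / 2\<rceil> = int ((N + 1) div 2)"
      unfolding ceil_half N_def using c by (simp add: zdiv_int)
    have K2: "int T + \<lfloor>real_of_int (int d + 1 - e) / 2\<rfloor> = int (N div 2)"
      unfolding floor_half N_def using c by (simp add: zdiv_int)
    have Ae: "complex_of_real (absv v \<pi> powi \<lceil>real_of_int e / 2\<rceil>) = A"
      unfolding ceil_half A_def using Apow[of "(e + 1) div 2"] e0 by simp
    have Be: "complex_of_real (absv v \<pi> powi \<lfloor>real_of_int e / 2\<rfloor>) = B"
      unfolding floor_half B_def using Apow[of "e div 2"] e0 by simp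
    have x1': "1 - ?x \<noteq> 0" using x1 by simp
    have S: "(\<Sum>l<N. f l) = (A * (1 - ?x ^ ((N+1) div 2)) + w * B * (1 - ?x ^ (N div 2))) / (1 - ?x)"
      using G[of N] x1' by (simp add: eq_divide_eq mult.commute)
    show "(\<Sum>l. (if e + int l \<le> 2 * int T + int d then f l else 0)) =
        complex_of_real (absv v \<pi> powi \<lceil>real_of_int e / 2\<rceil>) *
        (1 - ?x powi (int T + \<lceil>real_of_int (int d + 1 - e) / 2\<rceil>)) / (1 - ?x) +
        w * complex_of_real (absv v \<pi> powi \<lfloor>real_of_int e / 2\<rfloor>) *
        (1 - ?x powi (int T + \<lfloor>real_of_int (int d + 1 - e) / 2\<rfloor>)) / (1 - ?x)"
      unfolding sumN K1 K2 Ae Be power_int_of_nat S add_divide_distrib ..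
  next
    assume c0: "\<not> absv v (\<pi> ^ d * t\<^sup>2) \<le> absv v 2"
    have c: "\<not> e \<le> 2 * int T + int d" using c0 cond by simp
    have "e + int l \<le> 2 * int T + int d \<longleftrightarrow> False" for l using c by simp
    then show "(\<Sum>l. (if e + int l \<le> 2 * int T + int d then f l else 0)) = 0" by simp
  qed
qed


end
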